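(* Let $G$ be a graph and $k\ge2$. The following are equivalent: (a1) $M_k(G)$ is a non-trivial matroid and $G$ is a cacti-graph; (a2) $M_k(G)$ is a connected matroid.
   Context: Graphs are finite, may have loops and parallel edges, and have no isolated vertices. A leaf is a vertex incident to exactly one edge, which is not a loop. A cacti-graph is a graph with no isolated vertices, no leaves, and no component that is a cycle (equivalently every component has at least two cycles). For $X\subseteq E(G)$, $G\langle X\rangle$ is the subgraph with edge set $X$ and vertex set the vertices incident to $X$. For $k\ge0$, $M_k(G)$ is the matroid on $E(G)$ whose circuits are the inclusion-minimal members of $\{C\subseteq E(G):C\neq\emptyset,\ |C|=|V(G\langle C\rangle)|+k\}$. A matroid is non-trivial if it has at least one circuit and at least one cocircuit; it is connected if its ground set has at least two elements and every two elements lie in a common circuit. *)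

theory Defs
  imports Main
begin

text \<open>A (multi)graph is given by a finite edge set E and an incidence map inc:
  each edge is incident to one vertex (a loop) or two vertices. The vertex set is
  the set of vertices incident to edges, so there are no isolated vertices.\<close>

definition graph :: "'e set \<Rightarrow> ('e \<Rightarrow> 'v set) \<Rightarrow> bool" where
  "graph E inc \<longleftrightarrow> finite E \<and> (\<forall>e\<in>E. card (inc e) = 1 \<or> card (inc e) = 2)"

definition verts :: "('e \<Rightarrow> 'v set) \<Rightarrow> 'e set \<Rightarrow> 'v set" where
  "verts inc X = \<Union> (inc ` X)"

definition is_loop :: "('e \<Rightarrow> 'v set) \<Rightarrow> 'e \<Rightarrow> bool" where
  "is_loop inc e \<longleftrightarrow> card (inc e) = 1"

definition degree :: "'e set \<Rightarrow> ('e \<Rightarrow> 'v set) \<Rightarrow> 'v \<Rightarrow> nat" where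
  "degree F inc v = card {e\<in>F. v \<in> inc e \<and> \<not> is_loop inc e}
                    + 2 * card {e\<in>F. v \<in> inc e \<and> is_loop inc e}"

definition is_leaf :: "'e set \<Rightarrow> ('e \<Rightarrow> 'v set) \<Rightarrow> 'v \<Rightarrow> bool" where
  "is_leaf E inc v \<longleftrightarrow> (\<exists>e\<in>E. {f\<in>E. v \<in> inc f} = {e} \<and> \<not> is_loop inc e)"

definition edge_connected :: "('e \<Rightarrow> 'v set) \<Rightarrow> 'e set \<Rightarrow> bool" where
  "edge_connected inc F \<longleftrightarrow> F \<noteq> {} \<and>
     (\<forall>e\<in>F. \<forall>f\<in>F. (e, f) \<in> {(a, b). a \<in> F \<and> b \<in> F \<and> inc a \<inter> inc b \<noteq> {}}\<^sup>*)"

definition is_component :: "'e set \<Rightarrow> ('e \<Rightarrow> 'v set) \<Rightarrow> 'e set \<Rightarrow> bool" where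
  "is_component E inc F \<longleftrightarrow> F \<subseteq> E \<and> edge_connected inc F \<and>
     (\<forall>e\<in>E - F. inc e \<inter> verts inc F = {})"

definition is_cycle_graph :: "('e \<Rightarrow> 'v set) \<Rightarrow> 'e set \<Rightarrow> bool" where
  "is_cycle_graph inc F \<longleftrightarrow> edge_connected inc F \<and> (\<forall>v\<in>verts inc F. degree F inc v = 2)"

definition cacti_graph :: "'e set \<Rightarrow> ('e \<Rightarrow> 'v set) \<Rightarrow> bool" where
  "cacti_graph E inc \<longleftrightarrow>
     (\<forall>v\<in>verts inc E. \<not> is_leaf E inc v) \<and>
     (\<forall>F. is_component E inc F \<longrightarrow> \<not> is_cycle_graph inc F)"

definition Mk_circuits :: "nat \<Rightarrow> 'e set \<Rightarrow> ('e \<Rightarrow> 'v set) \<Rightarrow> 'e set set" where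
  "Mk_circuits k E inc =
     {C. C \<subseteq> E \<and> C \<noteq> {} \<and> card C = card (verts inc C) + k \<and>
         (\<forall>D. D \<subset> C \<longrightarrow> \<not> (D \<noteq> {} \<and> card D = card (verts inc D) + k))}"

definition matroid_circuits :: "'e set \<Rightarrow> 'e set set \<Rightarrow> bool" where
  "matroid_circuits S \<C> \<longleftrightarrow> finite S \<and> (\<forall>C\<in>\<C>. C \<subseteq> S) \<and> {} \<notin> \<C> \<and>
     (\<forall>C1\<in>\<C>. \<forall>C2\<in>\<C>. C1 \<subseteq> C2 \<longrightarrow> C1 = C2) \<and>
     (\<forall>C1\<in>\<C>. \<forall>C2\<in>\<C>. \<forall>e. C1 \<noteq> C2 \<and> e \<in> C1 \<inter> C2 \<longrightarrow>
        (\<exists>C3\<in>\<C>. C3 \<subseteq> (C1 \<union> C2) - {e}))"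

definition m_indep :: "'e set \<Rightarrow> 'e set set \<Rightarrow> 'e set \<Rightarrow> bool" where
  "m_indep S \<C> X \<longleftrightarrow> X \<subseteq> S \<and> (\<forall>C\<in>\<C>. \<not> C \<subseteq> X)"

definition m_basis :: "'e set \<Rightarrow> 'e set set \<Rightarrow> 'e set \<Rightarrow> bool" where
  "m_basis S \<C> B \<longleftrightarrow> m_indep S \<C> B \<and> (\<forall>X. B \<subset> X \<longrightarrow> \<not> m_indep S \<C> X)"

definition m_cocircuit :: "'e set \<Rightarrow> 'e set set \<Rightarrow> 'e set \<Rightarrow> bool" where
  "m_cocircuit S \<C> D \<longleftrightarrow> D \<subseteq> S \<and> D \<noteq> {} \<and> (\<forall>B. m_basis S \<C> B \<longrightarrow> D \<inter> B \<noteq> {}) \<and>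
     (\<forall>D'. D' \<subset> D \<longrightarrow> (\<exists>B. m_basis S \<C> B \<and> D' \<inter> B = {}))"

definition nontrivial_matroid :: "'e set \<Rightarrow> 'e set set \<Rightarrow> bool" where
  "nontrivial_matroid S \<C> \<longleftrightarrow> matroid_circuits S \<C> \<and> \<C> \<noteq> {} \<and> (\<exists>D. m_cocircuit S \<C> D)"

definition connected_matroid :: "'e set \<Rightarrow> 'e set set \<Rightarrow> bool" where
  "connected_matroid S \<C> \<longleftrightarrow> matroid_circuits S \<C> \<and> 2 \<le> card S \<and>
     (\<forall>x\<in>S. \<forall>y\<in>S. x \<noteq> y \<longrightarrow> (\<exists>C\<in>\<C>. x \<in> C \<and> y \<in> C))"

end

theory Submission
  imports Defs
begin

definition ff :: "('e \<Rightarrow> 'v set) \<Rightarrow> 'e set \<Rightarrow> int" where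
  "ff inc X = int (card X) - int (card (verts inc X))"

lemma verts_Un: "verts inc (A \<union> B) = verts inc A \<union> verts inc B"
  by (auto simp: verts_def)

lemma verts_mono: "A \<subseteq> B \<Longrightarrow> verts inc A \<subseteq> verts inc B"
  by (auto simp: verts_def)

lemma verts_empty[simp]: "verts inc {} = {}"
  by (auto simp: verts_def)

locale G =
  fixes E :: "'e set" and inc :: "'e \<Rightarrow> 'v set"
  assumes finE: "finite E" and incc: "\<forall>e\<in>E. card (inc e) = 1 \<or> card (inc e) = 2"
begin

abbreviation f where "f \<equiv> ff inc"

lemma inc_fin: "e \<in> E \<Longrightarrow> finite (inc e)"
  using incc by (metis card.infinite zero_neq_one zero_neq_numeral)

lemma inc_ne: "e \<in> E \<Longrightarrow> inc e \<noteq> {}"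
  using incc by fastforce

lemma sub_fin: "X \<subseteq> E \<Longrightarrow> finite X"
  using finE finite_subset by blast

lemma verts_fin: "X \<subseteq> E \<Longrightarrow> finite (verts inc X)"
  unfolding verts_def using sub_fin inc_fin by blast

lemma supermod:
  assumes "A \<subseteq> E" "B \<subseteq> E"
  shows "f A + f B \<le> f (A \<union> B) + f (A \<inter> B)"
proof -
  have fa: "finite A" "finite B" using assms sub_fin by auto
  have fv: "finite (verts inc A)" "finite (verts inc B)" using assms verts_fin by auto
  have c1: "card (A \<union> B) + card (A \<inter> B) = card A + card B"
    using card_Un_Int fa by metis
  have c2: "card (verts inc A \<union> verts inc B) + card (verts inc A \<inter> verts inc B) = card (verts inc A) + card (verts inc B)"
    using card_Un_Int fv by metis
  have "verts inc (A \<inter> B) \<subseteq> verts inc A \<inter> verts inc B"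
    by (auto simp: verts_def)
  hence c3: "card (verts inc (A \<inter> B)) \<le> card (verts inc A \<inter> verts inc B)"
    using fv by (simp add: card_mono)
  show ?thesis unfolding ff_def verts_Un using c1 c2 c3 by linarith
qed

lemma step:
  assumes "X \<subseteq> E" "z \<in> X"
  shows "f X - 1 \<le> f (X - {z})"
proof -
  have "finite X" using assms sub_fin by auto
  hence c: "card (X - {z}) = card X - 1" "card X \<ge> 1" using assms
    by (auto simp: card_gt_0_iff Suc_le_eq)
  have "card (verts inc (X - {z})) \<le> card (verts inc X)"
    using verts_fin[OF assms(1)] verts_mono[of "X - {z}" X inc] by (simp add: card_mono)
  thus ?thesis unfolding ff_def using c by linarith
qed

lemma single: "e \<in> E \<Longrightarrow> f {e} \<le> 0"
  unfolding ff_def verts_def using inc_ne inc_fin by (simp add: card_gt_0_iff Suc_le_eq)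

lemma f_empty[simp]: "f {} = 0"
  by (simp add: ff_def)

lemma ivt:
  assumes "W \<subseteq> X" "X \<subseteq> E" "f W \<le> K" "K \<le> f X"
  shows "\<exists>Y. W \<subseteq> Y \<and> Y \<subseteq> X \<and> f Y = K"
  using assms
proof (induction "card (X - W)" arbitrary: X)
  case 0
  hence "X = W" using sub_fin[of X] by auto
  thus ?case using 0 by auto
next
  case (Suc n)
  show ?case
  proof (cases "f X = K")
    case True thus ?thesis using Suc by auto
  next
    case False
    have "X \<noteq> W" using False Suc.prems by auto
    then obtain z where z: "z \<in> X - W" using Suc(3) by blast
    have fx: "finite X" using sub_fin Suc(4) by auto
    have "X - W = insert z ((X - {z}) - W)" using z by auto
    hence "card (X - W) = Suc (card ((X - {z}) - W))" using fx by (simp add: card_insert_if)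
    hence "n = card ((X - {z}) - W)" using Suc(2) by simp
    moreover have "K \<le> f (X - {z})" using step[of X z] Suc False z by auto
    ultimately obtain Y where "W \<subseteq> Y \<and> Y \<subseteq> X - {z} \<and> f Y = K"
      using Suc(1)[of "X - {z}"] Suc z by auto
    thus ?thesis by auto
  qed
qed

lemma f_eq_k: "X \<subseteq> E \<Longrightarrow> (card X = card (verts inc X) + k) \<longleftrightarrow> f X = int k"
  unfolding ff_def by auto

lemma circ_proper:
  assumes "C \<in> Mk_circuits k E inc" "1 \<le> k" "D \<subset> C" "D \<noteq> {}"
  shows "f D < int k"
proof (rule ccontr)
  assume "\<not> f D < int k"
  hence h: "int k \<le> f D" by simp
  have CE: "C \<subseteq> E" using assms(1) by (simp add: Mk_circuits_def)
  obtain e where e: "e \<in> D" using assms(4) by blast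
  have "f {e} \<le> int k" using single[of e] e assms(3) CE assms(2) by auto
  then obtain Y where Y: "{e} \<subseteq> Y" "Y \<subseteq> D" "f Y = int k"
    using ivt[of "{e}" D "int k"] e h assms(3) CE by auto
  have "Y \<subset> C" "Y \<noteq> {}" using Y assms(3) by auto
  moreover have "card Y = card (verts inc Y) + k" using f_eq_k[of Y] Y assms(3) CE by auto
  ultimately show False using assms(1) unfolding Mk_circuits_def by blast
qed

lemma circ_f: "C \<in> Mk_circuits k E inc \<Longrightarrow> f C = int k"
  using f_eq_k unfolding Mk_circuits_def by blast

definition rigid where "rigid X \<longleftrightarrow> (\<forall>Y. Y \<subset> X \<longrightarrow> f Y < f X)"

lemma circ_intro:
  assumes "C \<subseteq> E" "C \<noteq> {}" "f C = int k" "rigid C"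
  shows "C \<in> Mk_circuits k E inc"
proof -
  have "\<forall>D. D \<subset> C \<longrightarrow> \<not> (D \<noteq> {} \<and> card D = card (verts inc D) + k)"
  proof (intro allI impI notI)
    fix D assume "D \<subset> C" "D \<noteq> {} \<and> card D = card (verts inc D) + k"
    hence "D \<subseteq> E" using assms(1) by auto
    hence "f D = int k" using f_eq_k[of D] \<open>D \<noteq> {} \<and> card D = card (verts inc D) + k\<close> by blast
    moreover have "f D < f C" using \<open>D \<subset> C\<close> assms(4) unfolding rigid_def by blast
    ultimately show False using assms(3) by simp
  qed
  thus ?thesis unfolding Mk_circuits_def using assms f_eq_k[of C] by auto
qed

lemma core:
  assumes "X \<subseteq> E"
  shows "\<exists>C\<subseteq>X. (\<forall>Y\<subseteq>X. f Y \<le> f C) \<and> rigid C"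
proof -
  have fin: "finite (f ` Pow X)" using sub_fin[OF assms] by simp
  define m where "m = Max (f ` Pow X)"
  have mx: "\<forall>Y\<subseteq>X. f Y \<le> m" unfolding m_def using fin by auto
  have "m \<in> f ` Pow X" unfolding m_def using fin by (intro Max_in) auto
  then obtain C0 where "C0 \<subseteq> X" "f C0 = m" by auto
  then obtain C where C: "C \<subseteq> X \<and> f C = m" and Cmin: "\<forall>C'. C' \<subseteq> X \<and> f C' = m \<longrightarrow> card C \<le> card C'"
    using ex_has_least_nat[of "\<lambda>C. C \<subseteq> X \<and> f C = m" C0 card] by blast
  have "rigid C" unfolding rigid_def
  proof (intro allI impI)
    fix Y assume Y: "Y \<subset> C"
    have "card Y < card C" using Y C sub_fin[of C] assms by (meson psubset_card_mono subset_trans)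
    hence "f Y \<noteq> m" using Cmin Y C by (meson leD psubset_imp_subset subset_trans)
    moreover have "f Y \<le> m" using mx Y C by auto
    ultimately show "f Y < f C" using C by auto
  qed
  thus ?thesis using C mx by auto
qed

lemma main:
  assumes k2: "2 \<le> k"
  shows "A \<subseteq> E \<Longrightarrow> rigid A \<Longrightarrow> int k \<le> f A \<Longrightarrow> x \<in> A \<Longrightarrow> y \<in> A
    \<Longrightarrow> \<exists>C\<in>Mk_circuits k E inc. x \<in> C \<and> y \<in> C"
proof (induction "card A" arbitrary: A rule: less_induct)
  case less
  show ?case
  proof (cases "f A = int k")
    case True
    have "A \<in> Mk_circuits k E inc" using circ_intro[of A k] less True by auto
    thus ?thesis using less by auto
  next
    case False
    define M where "M = f A"
    have M3: "int k + 1 \<le> M" using False less M_def by auto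
    have AE: "A \<subseteq> E" using less by auto
    have rig: "\<And>Y. Y \<subset> A \<Longrightarrow> f Y < M" using less(3) unfolding rigid_def M_def by auto
    have cz: "\<exists>C\<subseteq>A - {z}. (\<forall>Y\<subseteq>A - {z}. f Y \<le> f C) \<and> rigid C \<and> f C = M - 1" if "z \<in> A" for z
    proof -
      obtain C where C: "C \<subseteq> A - {z}" "\<forall>Y\<subseteq>A - {z}. f Y \<le> f C" "rigid C"
        using core[of "A - {z}"] AE by auto
      have "M - 1 \<le> f (A - {z})" using step[of A z] AE that M_def by auto
      hence "M - 1 \<le> f C" using C by auto
      moreover have "f C < M" using rig[of C] C that by auto
      ultimately have "f C = M - 1" by linarith
      thus ?thesis using C by blast
    qed
    obtain Ax where Ax: "Ax \<subseteq> A - {x}" "\<forall>Y\<subseteq>A - {x}. f Y \<le> f Ax" "rigid Ax" "f Ax = M - 1"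
      using cz[of x] less by auto
    obtain Ay where Ay: "Ay \<subseteq> A - {y}" "\<forall>Y\<subseteq>A - {y}. f Y \<le> f Ay" "rigid Ay" "f Ay = M - 1"
      using cz[of y] less by auto
    have "f (Ax \<union> Ay) \<le> M"
    proof (cases "Ax \<union> Ay = A")
      case True thus ?thesis using M_def by simp
    next
      case False
      have "Ax \<union> Ay \<subseteq> A" using Ax(1) Ay(1) by blast
      hence "Ax \<union> Ay \<subset> A" using False by blast
      thus ?thesis using rig[of "Ax \<union> Ay"] by linarith
    qed
    moreover have AxE: "Ax \<subseteq> E" "Ay \<subseteq> E" using Ax(1) Ay(1) AE by auto
    moreover have "f Ax + f Ay \<le> f (Ax \<union> Ay) + f (Ax \<inter> Ay)" using supermod AxE by blast
    ultimately have "1 \<le> f (Ax \<inter> Ay)" using Ax(4) Ay(4) M3 k2 by linarith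
    hence "Ax \<inter> Ay \<noteq> {}" by auto
    then obtain z where z: "z \<in> Ax" "z \<in> Ay" by blast
    have zA: "z \<in> A" using z Ax by auto
    obtain C where C: "C \<subseteq> A - {z}" "\<forall>Y\<subseteq>A - {z}. f Y \<le> f C" "rigid C" "f C = M - 1"
      using cz[OF zA] by auto
    have mem: "w \<in> C" if B: "B \<subseteq> A - {w}" "\<forall>Y\<subseteq>A - {w}. f Y \<le> f B" "rigid B" "z \<in> B" "w \<in> A" for w B
    proof (rule ccontr)
      assume "w \<notin> C"
      hence "C \<union> B \<subseteq> A - {w}" using C(1) B(1) by auto
      hence "f (C \<union> B) \<le> f B" using B(2) by blast
      moreover have "C \<inter> B \<subset> B" using C(1) B(4) by auto
      hence "f (C \<inter> B) < f B" using B(3) unfolding rigid_def by blast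
      moreover have "C \<subseteq> E" "B \<subseteq> E" using C(1) B(1) AE by auto
      hence "f C + f B \<le> f (C \<union> B) + f (C \<inter> B)" using supermod by blast
      moreover have "B \<subset> A" using B(1) B(5) by auto
      hence "f B \<le> f C" using C(4) rig[of B] by linarith
      ultimately show False by linarith
    qed
    have "x \<in> C" using mem[OF Ax(1,2,3) z(1)] less(5) by blast
    moreover have "y \<in> C" using mem[OF Ay(1,2,3) z(2)] less(6) by blast
    moreover have "C \<subset> A" using C zA by auto
    hence "card C < card A" using sub_fin[OF AE] by (simp add: psubset_card_mono)
    moreover have "C \<subseteq> E" using C(1) AE by auto
    ultimately show ?thesis using less(1)[of C] C(3,4) M3 by auto
  qed
qed

definition wt :: "'e \<Rightarrow> nat" where "wt e = (if card (inc e) = 1 then 2 else 1)"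

lemma wt_card: "e \<in> E \<Longrightarrow> wt e * card (inc e) = 2"
  using incc unfolding wt_def by auto

lemma card_filter_sum: "finite R \<Longrightarrow> card {e\<in>R. P e} = (\<Sum>e\<in>R. if P e then 1 else 0)"
  by (simp add: sum.inter_filter[symmetric])

lemma deg_sum:
  assumes "R \<subseteq> E"
  shows "degree R inc v = (\<Sum>e\<in>R. if v \<in> inc e then wt e else 0)"
proof -
  have fr: "finite R" using assms sub_fin by auto
  have "(\<Sum>e\<in>R. if v \<in> inc e then wt e else 0) =
     (\<Sum>e\<in>R. (if v \<in> inc e \<and> \<not> is_loop inc e then 1 else 0) + 2 * (if v \<in> inc e \<and> is_loop inc e then 1 else 0))"
    by (rule sum.cong) (auto simp: wt_def is_loop_def)
  also have "\<dots> = card {e\<in>R. v \<in> inc e \<and> \<not> is_loop inc e} + 2 * card {e\<in>R. v \<in> inc e \<and> is_loop inc e}"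
    using fr by (simp add: sum.distrib sum_distrib_left card_filter_sum)
  finally show ?thesis unfolding degree_def by simp
qed

lemma deg_sumS:
  assumes "R \<subseteq> E" "finite S"
  shows "(\<Sum>v\<in>S. degree R inc v) = (\<Sum>e\<in>R. wt e * card (S \<inter> inc e))"
proof -
  have fr: "finite R" using assms sub_fin by auto
  have "(\<Sum>v\<in>S. degree R inc v) = (\<Sum>v\<in>S. \<Sum>e\<in>R. if v \<in> inc e then wt e else 0)"
    using deg_sum[OF assms(1)] by simp
  also have "\<dots> = (\<Sum>e\<in>R. \<Sum>v\<in>S. if v \<in> inc e then wt e else 0)" by (rule sum.swap)
  also have "\<dots> = (\<Sum>e\<in>R. wt e * card (S \<inter> inc e))"
  proof (rule sum.cong)
    fix e assume "e \<in> R"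
    have "(\<Sum>v\<in>S. if v \<in> inc e then wt e else 0) = (\<Sum>v\<in>{v\<in>S. v \<in> inc e}. wt e)"
      using sum.inter_filter[OF assms(2), of "\<lambda>v. wt e" "\<lambda>v. v \<in> inc e"] by simp
    also have "\<dots> = wt e * card (S \<inter> inc e)" by (simp add: Int_def)
    finally show "(\<Sum>v\<in>S. if v \<in> inc e then wt e else 0) = wt e * card (S \<inter> inc e)" .
  qed simp
  finally show ?thesis .
qed

lemma deg_mono:
  assumes "R \<subseteq> F" "F \<subseteq> E"
  shows "degree R inc v \<le> degree F inc v"
proof -
  have "(\<Sum>e\<in>R. if v \<in> inc e then wt e else 0) \<le> (\<Sum>e\<in>F. if v \<in> inc e then wt e else 0)"
    using assms sub_fin by (intro sum_mono2) auto
  thus ?thesis using deg_sum assms by auto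
qed

lemma two_reg_bound:
  assumes "C1 \<subseteq> F" "F \<subseteq> E" "\<forall>v\<in>verts inc F. degree F inc v = 2"
  shows "card C1 \<le> card (verts inc C1)"
proof -
  have C1E: "C1 \<subseteq> E" using assms by auto
  have fv: "finite (verts inc C1)" using verts_fin C1E by auto
  have "(\<Sum>v\<in>verts inc C1. degree C1 inc v) = (\<Sum>e\<in>C1. wt e * card (verts inc C1 \<inter> inc e))"
    using deg_sumS[OF C1E fv] .
  also have "\<dots> = (\<Sum>e\<in>C1. 2)"
  proof (rule sum.cong)
    fix e assume e: "e \<in> C1"
    hence "verts inc C1 \<inter> inc e = inc e" unfolding verts_def by auto
    thus "wt e * card (verts inc C1 \<inter> inc e) = 2" using wt_card e C1E by auto
  qed simp
  finally have s1: "(\<Sum>v\<in>verts inc C1. degree C1 inc v) = 2 * card C1" by simp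
  have "(\<Sum>v\<in>verts inc C1. degree C1 inc v) \<le> (\<Sum>v\<in>verts inc C1. 2)"
  proof (rule sum_mono)
    fix v assume "v \<in> verts inc C1"
    hence "v \<in> verts inc F" using verts_mono[OF assms(1), of inc] by auto
    thus "degree C1 inc v \<le> 2" using deg_mono[OF assms(1,2)] assms(3) by metis
  qed
  thus ?thesis using s1 by simp
qed

lemma deg_ge2:
  assumes nl: "\<not> is_leaf E inc v" and v: "v \<in> verts inc E"
  shows "2 \<le> degree E inc v"
proof -
  obtain e0 where e0: "e0 \<in> E" "v \<in> inc e0" using v unfolding verts_def by auto
  have fin: "finite E" using finE .
  show ?thesis
  proof (cases "\<exists>e\<in>E. v \<in> inc e \<and> is_loop inc e")
    case True
    then obtain e where "e \<in> {e\<in>E. v \<in> inc e \<and> is_loop inc e}" by auto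
    moreover have "finite {e\<in>E. v \<in> inc e \<and> is_loop inc e}" using fin by simp
    ultimately have "1 \<le> card {e\<in>E. v \<in> inc e \<and> is_loop inc e}"
      using card_gt_0_iff by (metis One_nat_def Suc_leI empty_iff)
    thus ?thesis unfolding degree_def by linarith
  next
    case False
    hence nl0: "\<not> is_loop inc e0" using e0 by auto
    have "{f\<in>E. v \<in> inc f} \<noteq> {e0}" using nl e0 nl0 unfolding is_leaf_def by blast
    then obtain e1 where e1: "e1 \<in> E" "v \<in> inc e1" "e1 \<noteq> e0" using e0 by blast
    hence "\<not> is_loop inc e1" using False by auto
    hence "{e0, e1} \<subseteq> {e\<in>E. v \<in> inc e \<and> \<not> is_loop inc e}" using e0 e1 nl0 by auto
    hence "card {e0, e1} \<le> card {e\<in>E. v \<in> inc e \<and> \<not> is_loop inc e}" using fin by (intro card_mono) auto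
    thus ?thesis using e1 unfolding degree_def by simp
  qed
qed

lemma sum_eq_bound:
  fixes t :: "'a \<Rightarrow> nat"
  assumes "finite A" "\<forall>x\<in>A. t x \<le> c" "(\<Sum>x\<in>A. t x) \<ge> c * card A" "a \<in> A"
  shows "t a = c"
proof (rule ccontr)
  assume "t a \<noteq> c"
  hence "t a < c" using assms by fastforce
  hence "(\<Sum>x\<in>A. t x) < (\<Sum>x\<in>A. c)" using assms by (intro sum_strict_mono_ex1) auto
  thus False using assms(3) by (simp add: mult.commute)
qed

lemma sum_eq_bound2:
  fixes t :: "'a \<Rightarrow> nat"
  assumes "finite A" "\<forall>x\<in>A. c \<le> t x" "(\<Sum>x\<in>A. t x) \<le> c * card A" "a \<in> A"
  shows "t a = c"
proof (rule ccontr)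
  assume "t a \<noteq> c"
  hence "c < t a" using assms by fastforce
  hence "(\<Sum>x\<in>A. c) < (\<Sum>x\<in>A. t x)" using assms by (intro sum_strict_mono_ex1) auto
  thus False using assms(3) by (simp add: mult.commute)
qed

lemma cacti_rigid:
  assumes cac: "cacti_graph E inc"
  shows "rigid E"
  unfolding rigid_def
proof (intro allI impI)
  fix Y assume Y: "Y \<subset> E"
  define R where "R = E - Y"
  define N where "N = verts inc E - verts inc Y"
  have fE: "finite E" using finE .
  have RE: "R \<subseteq> E" "Y \<subseteq> E" using Y R_def by auto
  have fvE: "finite (verts inc E)" using verts_fin by auto
  have fN: "finite N" using fvE N_def by auto
  have vY: "verts inc Y \<subseteq> verts inc E" using verts_mono[of Y E inc] Y by auto
  have fY: "finite Y" using RE sub_fin by auto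
  have "card R = card E - card Y" unfolding R_def using fY RE by (simp add: card_Diff_subset)
  moreover have "card Y \<le> card E" using fE RE by (simp add: card_mono)
  ultimately have cE: "card E = card Y + card R" by simp
  have fvY: "finite (verts inc Y)" using fvE vY finite_subset by blast
  have "card N = card (verts inc E) - card (verts inc Y)" unfolding N_def using fvY vY by (simp add: card_Diff_subset)
  moreover have "card (verts inc Y) \<le> card (verts inc E)" using fvE vY by (simp add: card_mono)
  ultimately have cV: "card (verts inc E) = card (verts inc Y) + card N" by simp
  have Rne: "R \<noteq> {}" using Y R_def by auto
  have vN: "\<And>v e. v \<in> N \<Longrightarrow> e \<in> E \<Longrightarrow> v \<in> inc e \<Longrightarrow> e \<in> R"
    unfolding N_def R_def verts_def by auto
  have degRE: "degree R inc v = degree E inc v" if v: "v \<in> N" for v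
  proof -
    have "{e\<in>R. v \<in> inc e \<and> \<not> is_loop inc e} = {e\<in>E. v \<in> inc e \<and> \<not> is_loop inc e}"
      "{e\<in>R. v \<in> inc e \<and> is_loop inc e} = {e\<in>E. v \<in> inc e \<and> is_loop inc e}"
      using vN[OF v] RE by auto
    thus ?thesis unfolding degree_def by simp
  qed
  have d2: "\<forall>v\<in>N. 2 \<le> degree R inc v"
    using deg_ge2 cac degRE unfolding cacti_graph_def N_def by auto
  have t2: "\<forall>e\<in>R. wt e * card (N \<inter> inc e) \<le> 2"
  proof
    fix e assume e: "e \<in> R"
    have "card (N \<inter> inc e) \<le> card (inc e)" using inc_fin e RE by (intro card_mono) auto
    hence "wt e * card (N \<inter> inc e) \<le> wt e * card (inc e)" by simp
    moreover have "wt e * card (inc e) = 2" using wt_card e RE by blast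
    ultimately show "wt e * card (N \<inter> inc e) \<le> 2" by linarith
  qed
  have S: "(\<Sum>v\<in>N. degree R inc v) = (\<Sum>e\<in>R. wt e * card (N \<inter> inc e))"
    using deg_sumS[OF RE(1) fN] .
  have lo: "2 * card N \<le> (\<Sum>v\<in>N. degree R inc v)"
    using sum_mono[of N "\<lambda>v. 2" "\<lambda>v. degree R inc v"] d2 by simp
  have hi: "(\<Sum>e\<in>R. wt e * card (N \<inter> inc e)) \<le> 2 * card R"
    using sum_mono[of R "\<lambda>e. wt e * card (N \<inter> inc e)" "\<lambda>e. 2"] t2 by simp
  have le: "card N \<le> card R" using lo hi S by linarith
  show "f Y < f E"
  proof (rule ccontr)
    assume "\<not> f Y < f E"
    hence "card R \<le> card N" using cE cV unfolding ff_def by linarith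
    hence eq: "card N = card R" using le by simp
    have fR: "finite R" using RE sub_fin by auto
    have incN: "inc e \<subseteq> N" if e: "e \<in> R" for e
    proof -
      have "wt e * card (N \<inter> inc e) = 2"
        using sum_eq_bound[OF fR t2 _ e] lo S eq by (simp add: mult.commute)
      moreover have "wt e * card (inc e) = 2" using wt_card[of e] e RE by blast
      moreover have "wt e \<noteq> 0" by (simp add: wt_def)
      ultimately have "card (N \<inter> inc e) = card (inc e)" by (metis mult_left_cancel)
      hence "N \<inter> inc e = inc e" using inc_fin[of e] e RE by (intro card_subset_eq) auto
      thus ?thesis by auto
    qed
    have dE2: "degree E inc v = 2" if v: "v \<in> N" for v
    proof -
      have "degree R inc v = 2"
        using sum_eq_bound2[OF fN d2 _ v] hi S eq by (simp add: mult.commute)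
      thus ?thesis using degRE v by simp
    qed
    obtain e0 where e0: "e0 \<in> R" using Rne by auto
    define T where "T = {(a, b). a \<in> E \<and> b \<in> E \<and> inc a \<inter> inc b \<noteq> {}}"
    define F where "F = {b. (e0, b) \<in> T\<^sup>*}"
    define TF where "TF = {(a, b). a \<in> F \<and> b \<in> F \<and> inc a \<inter> inc b \<noteq> {}}"
    have FR: "F \<subseteq> R"
    proof
      fix b assume "b \<in> F"
      hence "(e0, b) \<in> T\<^sup>*" unfolding F_def by simp
      thus "b \<in> R"
      proof (induction rule: rtrancl_induct)
        case base thus ?case using e0 .
      next
        case (step a b)
        then obtain v where "v \<in> inc a" "v \<in> inc b" "b \<in> E" unfolding T_def by auto
        thus ?case using incN[OF step(3)] vN by auto
      qed
    qed
    have e0F: "e0 \<in> F" unfolding F_def by simp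
    have closed: "e \<in> F" if "e \<in> E" "b \<in> F" "inc e \<inter> inc b \<noteq> {}" for e b
    proof -
      have "(b, e) \<in> T" using that FR RE unfolding T_def by auto
      thus ?thesis using that(2) unfolding F_def by (simp add: rtrancl.rtrancl_into_rtrancl)
    qed
    have comp: "is_component E inc F"
      unfolding is_component_def edge_connected_def
    proof (intro conjI ballI)
      show "F \<subseteq> E" using FR RE by auto
      show "F \<noteq> {}" using e0F by auto
      have toF: "(e0, b) \<in> TF\<^sup>*" if "b \<in> F" for b
      proof -
        have "(e0, b) \<in> T\<^sup>*" using that unfolding F_def by simp
        thus ?thesis
        proof (induction rule: rtrancl_induct)
          case base thus ?case by simp
        next
          case (step a b)
          have "a \<in> F" "b \<in> F" using step(1,2) unfolding F_def by (auto intro: rtrancl.rtrancl_into_rtrancl)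
          hence "(a, b) \<in> TF" using step(2) unfolding T_def TF_def by auto
          thus ?case using step(3) by (simp add: rtrancl.rtrancl_into_rtrancl)
        qed
      qed
      have symTF: "sym (TF\<^sup>*)" by (rule sym_rtrancl) (auto simp: sym_def TF_def)
      fix a b assume "a \<in> F" "b \<in> F"
      hence "(a, e0) \<in> TF\<^sup>*" "(e0, b) \<in> TF\<^sup>*" using toF symTF unfolding sym_def by blast+
      thus "(a, b) \<in> {(a, b). a \<in> F \<and> b \<in> F \<and> inc a \<inter> inc b \<noteq> {}}\<^sup>*"
        unfolding TF_def[symmetric] by (rule rtrancl_trans)
    next
      fix e assume "e \<in> E - F"
      thus "inc e \<inter> verts inc F = {}" using closed unfolding verts_def by blast
    qed
    have "is_cycle_graph inc F"
      unfolding is_cycle_graph_def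
    proof (intro conjI ballI)
      show "edge_connected inc F" using comp unfolding is_component_def by simp
      fix v assume v: "v \<in> verts inc F"
      then obtain b where b: "b \<in> F" "v \<in> inc b" unfolding verts_def by auto
      have vN': "v \<in> N" using b FR incN by auto
      have "{e\<in>F. v \<in> inc e \<and> \<not> is_loop inc e} = {e\<in>E. v \<in> inc e \<and> \<not> is_loop inc e}"
        "{e\<in>F. v \<in> inc e \<and> is_loop inc e} = {e\<in>E. v \<in> inc e \<and> is_loop inc e}"
        using closed[of _ b] b FR RE by auto
      hence "degree F inc v = degree E inc v" unfolding degree_def by simp
      thus "degree F inc v = 2" using dE2[OF vN'] by simp
    qed
    thus False using comp cac unfolding cacti_graph_def by blast
  qed
qed

lemma conn_two:
  assumes "connected_matroid E (Mk_circuits k E inc)" "e \<in> E"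
  shows "\<exists>g\<in>E. g \<noteq> e"
proof (rule ccontr)
  assume "\<not> (\<exists>g\<in>E. g \<noteq> e)"
  hence "E \<subseteq> {e}" by auto
  hence "card E \<le> 1" using card_mono[of "{e}" E] by auto
  thus False using assms(1) unfolding connected_matroid_def by auto
qed

lemma conn_noleaf:
  assumes con: "connected_matroid E (Mk_circuits k E inc)" and k2: "2 \<le> k"
  shows "\<not> is_leaf E inc v"
proof
  assume "is_leaf E inc v"
  then obtain e where e: "e \<in> E" "{f\<in>E. v \<in> inc f} = {e}" "\<not> is_loop inc e"
    unfolding is_leaf_def by auto
  obtain g where g: "g \<in> E" "g \<noteq> e" using conn_two[OF con e(1)] by auto
  obtain C where C: "C \<in> Mk_circuits k E inc" "e \<in> C" "g \<in> C"
    using con e g unfolding connected_matroid_def by metis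
  have CE: "C \<subseteq> E" using C(1) unfolding Mk_circuits_def by auto
  define D where "D = C - {e}"
  have DC: "D \<subset> C" "D \<noteq> {}" using C g D_def by auto
  have ve: "v \<in> inc e" using e(2) by auto
  have vD: "verts inc D \<subseteq> verts inc C - {v}"
  proof
    fix u assume "u \<in> verts inc D"
    then obtain h where h: "h \<in> D" "u \<in> inc h" unfolding verts_def by auto
    have "h \<in> E" "h \<noteq> e" using h CE D_def by auto
    hence "v \<notin> inc h" using e(2) by blast
    thus "u \<in> verts inc C - {v}" using h D_def unfolding verts_def by auto
  qed
  have vC: "v \<in> verts inc C" using ve C(2) unfolding verts_def by auto
  have fvC: "finite (verts inc C)" using verts_fin CE by auto
  have "card (verts inc D) \<le> card (verts inc C - {v})" using vD fvC by (simp add: card_mono)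
  also have "\<dots> = card (verts inc C) - 1" using vC fvC by simp
  finally have c0: "card (verts inc D) \<le> card (verts inc C) - 1" .
  have "0 < card (verts inc C)" using vC fvC card_gt_0_iff by blast
  hence c1: "card (verts inc D) + 1 \<le> card (verts inc C)" using c0 by linarith
  have fC: "finite C" using CE sub_fin by auto
  have "card D = card C - 1" using C(2) fC D_def by simp
  moreover have "0 < card C" using C(2) fC card_gt_0_iff by blast
  ultimately have c2: "card D + 1 = card C" by linarith
  have "int k \<le> f D" using circ_f[OF C(1)] c1 c2 unfolding ff_def by linarith
  thus False using circ_proper[OF C(1) _ DC] k2 by auto
qed

lemma conn_nocycle:
  assumes con: "connected_matroid E (Mk_circuits k E inc)" and k2: "2 \<le> k"
    and comp: "is_component E inc F"
  shows "\<not> is_cycle_graph inc F"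
proof
  assume cyc: "is_cycle_graph inc F"
  have FE: "F \<subseteq> E" "F \<noteq> {}" using comp unfolding is_component_def edge_connected_def by auto
  have reg: "\<forall>v\<in>verts inc F. degree F inc v = 2" using cyc unfolding is_cycle_graph_def by auto
  have bnd: "\<And>C1. C1 \<subseteq> F \<Longrightarrow> card C1 \<le> card (verts inc C1)"
    using two_reg_bound[OF _ FE(1) reg] by auto
  obtain e where e: "e \<in> F" using FE by auto
  show False
  proof (cases "E - F = {}")
    case True
    obtain g where g: "g \<in> E" "g \<noteq> e" using conn_two[OF con] e FE by auto
    obtain C where C: "C \<in> Mk_circuits k E inc" "e \<in> C"
      using con e g FE unfolding connected_matroid_def by blast
    have "C \<subseteq> F" using C True unfolding Mk_circuits_def by auto
    hence "f C \<le> 0" using bnd unfolding ff_def by auto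
    thus False using circ_f[OF C(1)] k2 by auto
  next
    case False
    then obtain g where g: "g \<in> E" "g \<notin> F" by auto
    obtain C where C: "C \<in> Mk_circuits k E inc" "e \<in> C" "g \<in> C"
      using con e g FE unfolding connected_matroid_def by (metis subsetD)
    have CE: "C \<subseteq> E" using C(1) unfolding Mk_circuits_def by auto
    define C1 where "C1 = C \<inter> F"
    define C2 where "C2 = C - F"
    have C2C: "C2 \<subset> C" "C2 \<noteq> {}" using C e g C2_def by auto
    have fC: "finite C" using CE sub_fin by auto
    have Cun: "C = C1 \<union> C2" "C1 \<inter> C2 = {}" using C1_def C2_def by auto
    have cC: "card C = card C1 + card C2" using Cun fC by (metis card_Un_disjoint finite_Un)
    have v1: "verts inc C1 \<subseteq> verts inc F" using verts_mono[of C1 F inc] C1_def by auto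
    have v2: "verts inc C2 \<inter> verts inc F = {}" using comp C2_def CE unfolding is_component_def verts_def by blast
    have fv: "finite (verts inc C1)" "finite (verts inc C2)" using verts_fin CE Cun by auto
    have cV: "card (verts inc C) = card (verts inc C1) + card (verts inc C2)"
      using Cun(1) verts_Un[of inc C1 C2] v1 v2 fv by (metis card_Un_disjoint disjoint_iff subsetD)
    have "card C1 \<le> card (verts inc C1)" using bnd C1_def by auto
    hence "int k \<le> f C2" using circ_f[OF C(1)] cC cV unfolding ff_def by linarith
    thus False using circ_proper[OF C(1) _ C2C] k2 by auto
  qed
qed

lemma cocirc_exists:
  assumes mat: "matroid_circuits E (Mk_circuits k E inc)" and ne: "E \<noteq> {}" and k2: "2 \<le> k"
  shows "\<exists>D. m_cocircuit E (Mk_circuits k E inc) D"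
proof -
  define CC where "CC = Mk_circuits k E inc"
  have e0: "CC \<noteq> {} \<or> True" by simp
  have emp: "{} \<notin> CC" using mat CC_def unfolding matroid_circuits_def by auto
  have ind0: "m_indep E CC {}" unfolding m_indep_def using emp by auto
  obtain B0 where B0: "m_indep E CC B0" and B0max: "\<forall>X. m_indep E CC X \<longrightarrow> card E - card B0 \<le> card E - card X"
    using ex_has_least_nat[of "m_indep E CC" "{}" "\<lambda>X. card E - card X"] ind0 by blast
  have basis_ex: "m_basis E CC B0" unfolding m_basis_def
  proof (intro conjI allI impI notI)
    show "m_indep E CC B0" using B0 .
    fix X assume X: "B0 \<subset> X" "m_indep E CC X"
    hence "X \<subseteq> E" unfolding m_indep_def by auto
    hence "card B0 < card X" "card X \<le> card E" using X finE sub_fin by (auto simp: psubset_card_mono card_mono)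
    thus False using B0max X(2) by fastforce
  qed
  have bne: "B \<noteq> {}" if B: "m_basis E CC B" for B
  proof
    assume "B = {}"
    obtain x where x: "x \<in> E" using ne by auto
    have "\<not> m_indep E CC {x}" using B \<open>B = {}\<close> unfolding m_basis_def by auto
    then obtain C where C: "C \<in> CC" "C \<subseteq> {x}" using x unfolding m_indep_def by auto
    hence "C = {x}" using emp by (metis subset_singletonD)
    hence "f {x} = int k" using circ_f C(1) CC_def by auto
    thus False using single[OF x] k2 by auto
  qed
  define P where "P = (\<lambda>D. D \<subseteq> E \<and> D \<noteq> {} \<and> (\<forall>B. m_basis E CC B \<longrightarrow> D \<inter> B \<noteq> {}))"
  have "E \<inter> B \<noteq> {}" if B: "m_basis E CC B" for B
  proof -
    have "B \<subseteq> E" using B unfolding m_basis_def m_indep_def by blast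
    hence "E \<inter> B = B" by blast
    thus ?thesis using bne[OF B] by simp
  qed
  hence PE: "P E" unfolding P_def using ne by blast
  obtain D where D: "P D" and Dmin: "\<forall>D'. P D' \<longrightarrow> card D \<le> card D'"
    using ex_has_least_nat[of P E card] PE by blast
  have "m_cocircuit E CC D" unfolding m_cocircuit_def
  proof (intro conjI)
    show "D \<subseteq> E" "D \<noteq> {}" using D unfolding P_def by auto
    show "\<forall>B. m_basis E CC B \<longrightarrow> D \<inter> B \<noteq> {}" using D unfolding P_def by blast
    show "\<forall>D'. D' \<subset> D \<longrightarrow> (\<exists>B. m_basis E CC B \<and> D' \<inter> B = {})"
    proof (intro allI impI)
      fix D' assume D': "D' \<subset> D"
      show "\<exists>B. m_basis E CC B \<and> D' \<inter> B = {}"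
      proof (cases "D' = {}")
        case True thus ?thesis using basis_ex by auto
      next
        case False
        have DE: "D \<subseteq> E" using D unfolding P_def by blast
        have "card D' < card D" using D' DE sub_fin by (meson psubset_card_mono)
        hence "\<not> P D'" using Dmin by fastforce
        moreover have "D' \<subseteq> E" using D' DE by blast
        ultimately show ?thesis using False unfolding P_def by blast
      qed
    qed
  qed
  thus ?thesis using CC_def by auto
qed

end

theorem mainTheorem13:
  fixes E :: "'e set" and inc :: "'e \<Rightarrow> 'v set" and k :: nat
  assumes "graph E inc" and "2 \<le> k"
  shows "(nontrivial_matroid E (Mk_circuits k E inc) \<and> cacti_graph E inc)
         \<longleftrightarrow> connected_matroid E (Mk_circuits k E inc)"
proof -
  interpret G E inc using assms(1) by unfold_locales (auto simp: graph_def)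
  show ?thesis
  proof
    assume h: "nontrivial_matroid E (Mk_circuits k E inc) \<and> cacti_graph E inc"
    have mat: "matroid_circuits E (Mk_circuits k E inc)" using h unfolding nontrivial_matroid_def by auto
    obtain C where C: "C \<in> Mk_circuits k E inc" using h unfolding nontrivial_matroid_def by auto
    have CE: "C \<subseteq> E" using C unfolding Mk_circuits_def by auto
    have rig: "rigid E" using cacti_rigid h by auto
    have "f C \<le> f E"
    proof (cases "C = E")
      case False
      hence "C \<subset> E" using CE by blast
      hence "f C < f E" using rig unfolding rigid_def by blast
      thus ?thesis by simp
    qed simp
    hence fE: "int k \<le> f E" using circ_f[OF C] by simp
    have "card C = card (verts inc C) + k" using C unfolding Mk_circuits_def by auto
    moreover have "card C \<le> card E" using CE finE by (simp add: card_mono)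
    ultimately have "2 \<le> card E" using assms(2) by linarith
    moreover have "\<forall>x\<in>E. \<forall>y\<in>E. x \<noteq> y \<longrightarrow> (\<exists>C\<in>Mk_circuits k E inc. x \<in> C \<and> y \<in> C)"
    proof (intro ballI impI)
      fix x y assume "x \<in> E" "y \<in> E" "x \<noteq> y"
      show "\<exists>C\<in>Mk_circuits k E inc. x \<in> C \<and> y \<in> C"
        using main[OF assms(2) _ rig fE \<open>x \<in> E\<close> \<open>y \<in> E\<close>] by simp
    qed
    ultimately show "connected_matroid E (Mk_circuits k E inc)"
      unfolding connected_matroid_def using mat by auto
  next
    assume con: "connected_matroid E (Mk_circuits k E inc)"
    have mat: "matroid_circuits E (Mk_circuits k E inc)" using con unfolding connected_matroid_def by auto
    have ne: "E \<noteq> {}" using con unfolding connected_matroid_def by auto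
    then obtain e where e: "e \<in> E" by auto
    obtain g where g: "g \<in> E" "g \<noteq> e" using conn_two[OF con e] by auto
    have "Mk_circuits k E inc \<noteq> {}" using con e g unfolding connected_matroid_def by blast
    hence nt: "nontrivial_matroid E (Mk_circuits k E inc)"
      unfolding nontrivial_matroid_def using mat cocirc_exists[OF mat ne assms(2)] by auto
    have "cacti_graph E inc" unfolding cacti_graph_def
      using conn_noleaf[OF con assms(2)] conn_nocycle[OF con assms(2)] by auto
    thus "nontrivial_matroid E (Mk_circuits k E inc) \<and> cacti_graph E inc" using nt by auto
  qed
qed

end
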